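(* Let $G$ be a finite simple graph with edge weight function $w$ and vertex weight function $w_1$, and let $u,v$ be distinct vertices of $G$. Writing $\eta=\eta_{(w,w_1)}$, $$\eta(G\setminus u,x)\,\eta(G\setminus v,x)-\eta(G,x)\,\eta(G\setminus uv,x)=\sum_{p\in P_{uv}(G)}\big(|w(p)|\,\eta(G\setminus p,x)\big)^2,$$ where $P_{uv}(G)$ is the set of all paths in $G$ with endpoints $u$ and $v$, $|w(p)|=\prod_{e\in E(p)}|w(e)|$, and $G\setminus p$ denotes $G$ with all vertices of $p$ deleted.
   Context: An edge weight function $w$ assigns a nonzero complex number to each edge; a vertex weight function $w_1$ assigns a real number (possibly $0$) to each vertex; subgraphs carry restricted weights; deleting vertices also deletes incident edges, and $G\setminus uv$ deletes both $u$ and $v$. For $A\subseteq E(G)$, $w(A)=\prod_{e\in A}w(e)$. $\mu_w(G,x)=\sum_{M}(-1)^{|M|}|w(M)|^2x^{n-2|M|}$ over all matchings $M$ (including empty). $\eta_{(w,w_1)}(G,x)=\sum_{S\subseteq V(G)}(-1)^{|V(G)\setminus S|}\big(\prod_{y\in V(G)\setminus S}w_1(y)\big)\mu_w(G[S],x)$ with $G[S]$ the induced subgraph; $\mu_w,\eta_{(w,w_1)}$ of the empty graph equal $1$. *)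

theory Defs
  imports Complex_Main
begin

definition simple_graph :: "'a set \<Rightarrow> 'a set set \<Rightarrow> bool" where
  "simple_graph V E \<longleftrightarrow> finite V \<and> (\<forall>e\<in>E. \<exists>a b. a \<noteq> b \<and> a \<in> V \<and> b \<in> V \<and> e = {a, b})"

definition induced_edges :: "'a set set \<Rightarrow> 'a set \<Rightarrow> 'a set set" where
  "induced_edges E S = {e \<in> E. e \<subseteq> S}"

definition matching :: "'a set set \<Rightarrow> 'a set set \<Rightarrow> bool" where
  "matching E M \<longleftrightarrow> M \<subseteq> E \<and> (\<forall>e1\<in>M. \<forall>e2\<in>M. e1 \<noteq> e2 \<longrightarrow> e1 \<inter> e2 = {})"

definition mu_w :: "'a set \<Rightarrow> 'a set set \<Rightarrow> ('a set \<Rightarrow> complex) \<Rightarrow> real \<Rightarrow> real" where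
  "mu_w V E w x = (\<Sum>M\<in>{M. matching E M}.
      (-1) ^ card M * (\<Prod>e\<in>M. cmod (w e)) ^ 2 * x ^ (card V - 2 * card M))"

definition eta_w :: "'a set \<Rightarrow> 'a set set \<Rightarrow> ('a set \<Rightarrow> complex) \<Rightarrow> ('a \<Rightarrow> real) \<Rightarrow> real \<Rightarrow> real" where
  "eta_w V E w w1 x = (\<Sum>S\<in>Pow V.
      (-1) ^ card (V - S) * (\<Prod>y\<in>V - S. w1 y) * mu_w S (induced_edges E S) w x)"

definition eta_del :: "'a set \<Rightarrow> 'a set set \<Rightarrow> ('a set \<Rightarrow> complex) \<Rightarrow> ('a \<Rightarrow> real) \<Rightarrow> 'a set \<Rightarrow> real \<Rightarrow> real" where
  "eta_del V E w w1 X x = eta_w (V - X) (induced_edges E (V - X)) w w1 x"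

text \<open>Paths from u to v, given as vertex lists starting at u and ending at v
  (for u \<noteq> v each path subgraph corresponds to exactly one such list).\<close>
definition paths :: "'a set set \<Rightarrow> 'a \<Rightarrow> 'a \<Rightarrow> 'a list set" where
  "paths E u v = {ps. ps \<noteq> [] \<and> distinct ps \<and> hd ps = u \<and> last ps = v \<and>
      (\<forall>i. Suc i < length ps \<longrightarrow> {ps ! i, ps ! Suc i} \<in> E)}"

definition path_weight :: "('a set \<Rightarrow> complex) \<Rightarrow> 'a list \<Rightarrow> real" where
  "path_weight w ps = (\<Prod>i<length ps - 1. cmod (w {ps ! i, ps ! Suc i}))"

end

theory Submission
  imports Defs
begin


definition twosets :: "'a set set \<Rightarrow> bool" where
  "twosets E \<longleftrightarrow> (\<forall>e\<in>E. \<exists>a b. a \<noteq> b \<and> e = {a, b})"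

definition mats :: "'a set set \<Rightarrow> 'a set \<Rightarrow> 'a set set set" where
  "mats E S = {M. matching (induced_edges E S) M}"

definition Q :: "'a set set \<Rightarrow> ('a set \<Rightarrow> complex) \<Rightarrow> ('a \<Rightarrow> real) \<Rightarrow> 'a set \<Rightarrow> real" where
  "Q E w z S = (\<Sum>M\<in>mats E S. (-1) ^ card M * (\<Prod>e\<in>M. cmod (w e)) ^ 2 * (\<Prod>y\<in>S - \<Union>M. z y))"

lemma finite_mats: "finite S \<Longrightarrow> finite (mats E S)"
proof -
  assume "finite S"
  then have "finite (Pow (Pow S))" by simp
  moreover have "mats E S \<subseteq> Pow (Pow S)"
    unfolding mats_def matching_def induced_edges_def by auto
  ultimately show ?thesis by (rule finite_subset[rotated])
qed

lemma mats_sub: "M \<in> mats E S \<Longrightarrow> \<Union>M \<subseteq> S"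
  unfolding mats_def matching_def induced_edges_def by auto

lemma mats_mono_iff: "T \<subseteq> S \<Longrightarrow> M \<in> mats E T \<longleftrightarrow> M \<in> mats E S \<and> \<Union>M \<subseteq> T"
  unfolding mats_def matching_def induced_edges_def by auto

lemma card_Union_mat:
  assumes "twosets E" "M \<in> mats E S" "finite S"
  shows "card (\<Union>M) = 2 * card M"
proof -
  have fin: "finite M" using assms(2,3) finite_mats mats_sub
    by (metis Pow_iff finite_Pow_iff finite_subset subsetI Union_subsetI Sup_le_iff)
  have pw: "pairwise disjnt M" using assms(2) unfolding mats_def matching_def pairwise_def disjnt_def by auto
  have c2: "card e = 2" if "e \<in> M" for e
    using that assms(1,2) unfolding mats_def matching_def induced_edges_def twosets_def by force
  have "card (\<Union>M) = sum card M"
    by (rule card_Union_disjoint[OF pw]) (use c2 in \<open>auto intro: card_ge_0_finite\<close>)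
  also have "\<dots> = 2 * card M" using c2 by simp
  finally show ?thesis .
qed


lemma induced_induced: "T \<subseteq> S \<Longrightarrow> induced_edges (induced_edges E S) T = induced_edges E T"
  unfolding induced_edges_def by auto

lemma inner_sum:
  fixes w1 :: "'a \<Rightarrow> real"
  assumes "finite S" "U \<subseteq> S"
  shows "(\<Sum>T\<in>{T\<in>Pow S. U \<subseteq> T}. (-1) ^ card (S - T) * (\<Prod>y\<in>S - T. w1 y) * x ^ (card T - card U))
       = (\<Prod>y\<in>S - U. x - w1 y)"
proof -
  let ?R = "S - U"
  have finR: "finite ?R" using assms by simp
  have img: "{T\<in>Pow S. U \<subseteq> T} = (\<lambda>B. U \<union> B) ` Pow ?R" using assms(2) by auto
  have inj: "inj_on (\<lambda>B. U \<union> B) (Pow ?R)" unfolding inj_on_def by auto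
  have "(\<Sum>T\<in>{T\<in>Pow S. U \<subseteq> T}. (-1) ^ card (S - T) * (\<Prod>y\<in>S - T. w1 y) * x ^ (card T - card U))
      = (\<Sum>B\<in>Pow ?R. (-1) ^ card (S - (U \<union> B)) * (\<Prod>y\<in>S - (U \<union> B). w1 y) * x ^ (card (U \<union> B) - card U))"
    unfolding img by (simp add: sum.reindex[OF inj])
  also have "\<dots> = (\<Sum>B\<in>Pow ?R. (\<Prod>y\<in>B. x) * (\<Prod>y\<in>?R - B. - w1 y))"
  proof (rule sum.cong[OF refl])
    fix B assume B: "B \<in> Pow ?R"
    have e1: "S - (U \<union> B) = ?R - B" by auto
    have fU: "finite U" using assms finite_subset by auto
    have fB: "finite B" using B finR finite_subset by auto
    have e2: "card (U \<union> B) - card U = card B"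
      using B fU fB by (subst card_Un_disjoint) auto
    show "(-1) ^ card (S - (U \<union> B)) * (\<Prod>y\<in>S - (U \<union> B). w1 y) * x ^ (card (U \<union> B) - card U)
        = (\<Prod>y\<in>B. x) * (\<Prod>y\<in>?R - B. - w1 y)"
      unfolding e1 e2 by (simp add: prod_uminus)
  qed
  also have "\<dots> = (\<Prod>y\<in>?R. x + - w1 y)" by (rule prod_add[OF finR, symmetric])
  finally show ?thesis by simp
qed

lemma eta_Q:
  assumes "twosets E" "finite S"
  shows "eta_w S (induced_edges E S) w w1 x = Q E w (\<lambda>y. x - w1 y) S"
proof -
  let ?s = "\<lambda>M. (-1) ^ card M * (\<Prod>e\<in>M. cmod (w e)) ^ 2"
  let ?c = "\<lambda>T. (-1) ^ card (S - T) * (\<Prod>y\<in>S - T. w1 y)"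
  have mu: "mu_w T (induced_edges (induced_edges E S) T) w x
      = (\<Sum>M\<in>{M\<in>mats E S. \<Union>M \<subseteq> T}. ?s M * x ^ (card T - card (\<Union>M)))" if "T \<in> Pow S" for T
  proof -
    have fT: "finite T" using that assms finite_subset by auto
    have "{M. matching (induced_edges (induced_edges E S) T) M} = {M\<in>mats E S. \<Union>M \<subseteq> T}"
      using that mats_mono_iff[where T=T and S=S and E=E] induced_induced[where T=T and S=S and E=E] unfolding mats_def by auto
    moreover have "card (\<Union>M) = 2 * card M" if "M\<in>{M\<in>mats E S. \<Union>M \<subseteq> T}" for M
      using that card_Union_mat[OF assms(1) _ fT, of M] mats_mono_iff[where T=T and S=S and E=E and M=M] \<open>T \<in> Pow S\<close> by auto
    ultimately show ?thesis unfolding mu_w_def by (intro sum.cong) auto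
  qed
  have "eta_w S (induced_edges E S) w w1 x
     = (\<Sum>T\<in>Pow S. \<Sum>M\<in>{M\<in>mats E S. \<Union>M \<subseteq> T}. ?c T * (?s M * x ^ (card T - card (\<Union>M))))"
    unfolding eta_w_def by (intro sum.cong refl) (simp add: mu sum_distrib_left)
  also have "\<dots> = (\<Sum>M\<in>mats E S. \<Sum>T\<in>{T\<in>Pow S. \<Union>M \<subseteq> T}. ?c T * (?s M * x ^ (card T - card (\<Union>M))))"
    by (rule sum.swap_restrict) (use assms finite_mats in auto)
  also have "\<dots> = (\<Sum>M\<in>mats E S. ?s M * (\<Prod>y\<in>S - \<Union>M. x - w1 y))"
  proof (rule sum.cong[OF refl])
    fix M assume M: "M \<in> mats E S"
    have "(\<Sum>T\<in>{T\<in>Pow S. \<Union>M \<subseteq> T}. ?c T * (?s M * x ^ (card T - card (\<Union>M))))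
        = ?s M * (\<Sum>T\<in>{T\<in>Pow S. \<Union>M \<subseteq> T}. ?c T * x ^ (card T - card (\<Union>M)))"
      by (simp add: sum_distrib_left mult_ac)
    also have "\<dots> = ?s M * (\<Prod>y\<in>S - \<Union>M. x - w1 y)"
      using inner_sum[OF assms(2) mats_sub[OF M], of w1 x] by simp
    finally show "(\<Sum>T\<in>{T\<in>Pow S. \<Union>M \<subseteq> T}. ?c T * (?s M * x ^ (card T - card (\<Union>M))))
        = ?s M * (\<Prod>y\<in>S - \<Union>M. x - w1 y)" .
  qed
  finally show ?thesis unfolding Q_def by simp
qed


lemma twosets_ne: "twosets E \<Longrightarrow> {u, i} \<in> E \<Longrightarrow> i \<noteq> u"
  unfolding twosets_def by (metis doubleton_eq_iff insert_absorb2)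

lemma fin_mat: "finite S \<Longrightarrow> M \<in> mats E S \<Longrightarrow> finite M"
  unfolding mats_def matching_def induced_edges_def by (rule finite_subset[of _ "Pow S"]) auto

lemma Q_rec:
  assumes tw: "twosets E" and fS: "finite S" and uS: "u \<in> S"
  shows "Q E w z S = z u * Q E w z (S - {u})
     - (\<Sum>i\<in>{i\<in>S. {u,i}\<in>E}. cmod (w {u,i}) ^ 2 * Q E w z (S - {u,i}))"
proof -
  define f where "f = (\<lambda>T M. (-1) ^ card M * (\<Prod>e\<in>M. cmod (w e)) ^ 2 * (\<Prod>y\<in>T - \<Union>M. z y))"
  have Qf: "Q E w z T = (\<Sum>M\<in>mats E T. f T M)" for T unfolding Q_def f_def by simp
  let ?N = "{i\<in>S. {u,i}\<in>E}"
  let ?A = "{M\<in>mats E S. u \<notin> \<Union>M}"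
  let ?B = "{M\<in>mats E S. u \<in> \<Union>M}"
  have split: "mats E S = ?A \<union> ?B" by auto
  have fA: "finite ?A" "finite ?B" using finite_mats[OF fS] by auto
  have sumS: "(\<Sum>M\<in>mats E S. f S M) = (\<Sum>M\<in>?A. f S M) + (\<Sum>M\<in>?B. f S M)"
    by (subst split, rule sum.union_disjoint) (use fA in auto)
  have A_eq: "?A = mats E (S - {u})"
    
  proof (intro set_eqI iffI)
    fix M assume "M \<in> ?A" then show "M \<in> mats E (S - {u})"
      using mats_mono_iff[where T="S-{u}" and S=S and E=E and M=M] mats_sub[where E=E and S=S and M=M] by auto
  next
    fix M assume "M \<in> mats E (S - {u})" then show "M \<in> ?A"
      using mats_mono_iff[where T="S-{u}" and S=S and E=E and M=M] by auto
  qed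
  have sumA: "(\<Sum>M\<in>?A. f S M) = z u * Q E w z (S - {u})"
    unfolding Qf A_eq sum_distrib_left
  proof (rule sum.cong[OF refl])
    fix M assume M: "M \<in> mats E (S - {u})"
    have "S - \<Union>M = insert u ((S - {u}) - \<Union>M)" using M mats_sub uS by blast
    moreover have "finite ((S - {u}) - \<Union>M)" using fS by simp
    ultimately show "f S M = z u * f (S - {u}) M" unfolding f_def by (simp add: mult_ac)
  qed
  define I where "I = (\<lambda>i. insert {u,i} ` mats E (S - {u,i}))"
  have B_eq: "?B = (\<Union>i\<in>?N. I i)"
  proof
    show "?B \<subseteq> (\<Union>i\<in>?N. I i)"
    proof
      fix M assume M: "M \<in> ?B"
      then obtain e where e: "e \<in> M" "u \<in> e" by auto
      have eE: "e \<in> E" "e \<subseteq> S" using M e unfolding mats_def matching_def induced_edges_def by auto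
      then obtain a b where ab: "a \<noteq> b" "e = {a,b}" using tw unfolding twosets_def by auto
      then obtain i where i: "e = {u,i}" using e(2) by auto
      have iN: "i \<in> ?N" using eE i by auto
      have disj: "\<forall>f\<in>M. f \<noteq> e \<longrightarrow> f \<inter> e = {}" using M e unfolding mats_def matching_def by auto
      have Mm: "M \<subseteq> E" "\<forall>f\<in>M. f \<subseteq> S" "\<forall>e1\<in>M. \<forall>e2\<in>M. e1 \<noteq> e2 \<longrightarrow> e1 \<inter> e2 = {}"
        using M unfolding mats_def matching_def induced_edges_def by auto
      have "\<forall>f\<in>M - {e}. f \<subseteq> S - {u,i}"
      proof
        fix f assume f: "f \<in> M - {e}"
        then have "f \<inter> {u,i} = {}" using disj i by auto
        then show "f \<subseteq> S - {u,i}" using Mm(2) f by auto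
      qed
      then have "M - {e} \<in> mats E (S - {u,i})"
        using Mm unfolding mats_def matching_def induced_edges_def by auto
      moreover have "M = insert {u,i} (M - {e})" using e i by auto
      ultimately show "M \<in> (\<Union>i\<in>?N. I i)" using iN unfolding I_def by blast
    qed
  next
    show "(\<Union>i\<in>?N. I i) \<subseteq> ?B"
    proof
      fix M assume "M \<in> (\<Union>i\<in>?N. I i)"
      then obtain i M' where i: "i \<in> ?N" and M': "M' \<in> mats E (S - {u,i})" and MM: "M = insert {u,i} M'"
        unfolding I_def by auto
      have M'm: "M' \<subseteq> E" "\<forall>f\<in>M'. f \<subseteq> S - {u,i}" "\<forall>e1\<in>M'. \<forall>e2\<in>M'. e1 \<noteq> e2 \<longrightarrow> e1 \<inter> e2 = {}"
        using M' unfolding mats_def matching_def induced_edges_def by auto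
      have d: "\<forall>f\<in>M'. f \<inter> {u,i} = {}" using M'm(2) by blast
      have "M \<subseteq> E" "\<forall>f\<in>M. f \<subseteq> S" using M'm i MM uS by auto
      moreover have "\<forall>e1\<in>M. \<forall>e2\<in>M. e1 \<noteq> e2 \<longrightarrow> e1 \<inter> e2 = {}"
        unfolding MM using M'm(3) d by (metis Int_commute insert_iff)
      ultimately have "M \<in> mats E S" unfolding mats_def matching_def induced_edges_def by auto
      then show "M \<in> ?B" using MM by auto
    qed
  qed
  have sumB: "(\<Sum>M\<in>?B. f S M) = (\<Sum>i\<in>?N. \<Sum>M\<in>I i. f S M)"
    unfolding B_eq
  proof (rule sum.UNION_disjoint)
    show "finite ?N" using fS by simp
    show "\<forall>i\<in>?N. finite (I i)" unfolding I_def using fS finite_mats by (auto intro!: finite_imageI)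
    show "\<forall>i\<in>?N. \<forall>j\<in>?N. i \<noteq> j \<longrightarrow> I i \<inter> I j = {}"
    proof (intro ballI impI)
      fix i j assume i: "i \<in> ?N" and j: "j \<in> ?N" and ij: "i \<noteq> j"
      show "I i \<inter> I j = {}"
      proof (rule ccontr)
        assume "I i \<inter> I j \<noteq> {}"
        then obtain M1 M2 where M1: "M1 \<in> mats E (S - {u,i})" and M2: "M2 \<in> mats E (S - {u,j})"
          and eq: "insert {u,i} M1 = insert {u,j} M2" unfolding I_def by auto
        have "{u,j} \<noteq> {u,i}" using ij by (metis doubleton_eq_iff)
        moreover have "{u,j} \<in> insert {u,i} M1" unfolding eq by simp
        ultimately have "{u,j} \<in> M1" by simp
        then show False using mats_sub[OF M1] by auto
      qed
    qed
  qed
  have sumI: "(\<Sum>M\<in>I i. f S M) = - (cmod (w {u,i}) ^ 2 * (\<Sum>M\<in>mats E (S - {u,i}). f (S - {u,i}) M))"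
    if i: "i \<in> ?N" for i
  proof -
    have nin: "{u,i} \<notin> M" if "M \<in> mats E (S - {u,i})" for M
      using mats_sub[OF that] by auto
    have inj: "inj_on (insert {u,i}) (mats E (S - {u,i}))"
      unfolding inj_on_def using nin by (metis insert_ident)
    have "(\<Sum>M\<in>I i. f S M) = (\<Sum>M\<in>mats E (S - {u,i}). f S (insert {u,i} M))"
      unfolding I_def by (simp add: sum.reindex[OF inj])
    also have "\<dots> = (\<Sum>M\<in>mats E (S - {u,i}). - (cmod (w {u,i}) ^ 2 * f (S - {u,i}) M))"
    proof (rule sum.cong[OF refl])
      fix M assume M: "M \<in> mats E (S - {u,i})"
      have fM: "finite M" using fin_mat[OF _ M] fS by simp
      have e1: "S - \<Union>(insert {u,i} M) = (S - {u,i}) - \<Union>M" by auto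
      show "f S (insert {u,i} M) = - (cmod (w {u,i}) ^ 2 * f (S - {u,i}) M)"
        unfolding f_def e1 using fM nin[OF M] by (simp add: power_mult_distrib)
    qed
    finally show ?thesis by (simp add: sum_negf sum_distrib_left)
  qed
  have "(\<Sum>i\<in>?N. \<Sum>M\<in>I i. f S M) = (\<Sum>i\<in>?N. - (cmod (w {u,i}) ^ 2 * Q E w z (S - {u,i})))"
    by (rule sum.cong[OF refl]) (simp only: sumI Qf)
  also have "\<dots> = - (\<Sum>i\<in>?N. cmod (w {u,i}) ^ 2 * Q E w z (S - {u,i}))"
    by (rule sum_negf)
  finally have sB: "(\<Sum>M\<in>?B. f S M) = - (\<Sum>i\<in>?N. cmod (w {u,i}) ^ 2 * Q E w z (S - {u,i}))"
    using sumB by simp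
  have "Q E w z S = (\<Sum>M\<in>?A. f S M) + (\<Sum>M\<in>?B. f S M)" using Qf sumS by simp
  then show ?thesis unfolding sumA sB by simp
qed


lemma paths_set:
  assumes "p \<in> paths (induced_edges E S) a b"
  shows "set p \<subseteq> insert a S"
proof
  fix y assume "y \<in> set p"
  then obtain k where k: "k < length p" "y = p ! k" by (auto simp: in_set_conv_nth)
  show "y \<in> insert a S"
  proof (cases k)
    case 0
    then show ?thesis using assms k by (auto simp: paths_def hd_conv_nth)
  next
    case (Suc j)
    then have "{p ! j, p ! k} \<in> induced_edges E S" using assms k unfolding paths_def by auto
    then show ?thesis using k unfolding induced_edges_def by auto
  qed
qed

lemma finite_paths:
  assumes "finite S"
  shows "finite (paths (induced_edges E S) a b)"
proof -
  let ?X = "{xs. set xs \<subseteq> insert a S \<and> length xs \<le> card (insert a S)}"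
  have "finite ?X" using assms by (intro finite_lists_length_le) simp
  moreover have "paths (induced_edges E S) a b \<subseteq> ?X"
  proof
    fix p assume p: "p \<in> paths (induced_edges E S) a b"
    have s: "set p \<subseteq> insert a S" by (rule paths_set[OF p])
    have "length p = card (set p)" using p distinct_card unfolding paths_def by fastforce
    also have "\<dots> \<le> card (insert a S)" using s assms by (intro card_mono) auto
    finally show "p \<in> ?X" using s by simp
  qed
  ultimately show ?thesis by (rule finite_subset[rotated])
qed

lemma paths_self: "paths E' v v = {[v]}"
proof
  show "paths E' v v \<subseteq> {[v]}"
  proof
    fix p assume p: "p \<in> paths E' v v"
    then have ne: "p \<noteq> []" and d: "distinct p" and h: "hd p = v" and l: "last p = v"
      unfolding paths_def by auto
    have "length p = 1"
    proof (rule ccontr)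
      assume "length p \<noteq> 1"
      then have L: "length p \<ge> 2" using ne by (cases p) (auto simp: Suc_le_eq)
      have "p ! 0 = p ! (length p - 1)" using h l ne by (simp add: hd_conv_nth last_conv_nth)
      moreover have "0 < length p" "length p - 1 < length p" using L by auto
      ultimately have "(0::nat) = length p - 1" using nth_eq_iff_index_eq[OF d, of 0 "length p - 1"] by blast
      then show False using L by simp
    qed
    then show "p \<in> {[v]}" using h by (cases p) auto
  qed
next
  show "{[v]} \<subseteq> paths E' v v" unfolding paths_def by auto
qed

lemma path_weight_Cons:
  assumes "q \<noteq> []"
  shows "path_weight w (u # q) = cmod (w {u, hd q}) * path_weight w q"
proof -
  obtain n where n: "length q = Suc n" using assms by (cases q) auto
  have "path_weight w (u # q) = (\<Prod>k<Suc n. cmod (w {(u#q) ! k, (u#q) ! Suc k}))"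
    unfolding path_weight_def using n by simp
  also have "\<dots> = cmod (w {u, q ! 0}) * (\<Prod>k<n. cmod (w {q ! k, q ! Suc k}))"
    by (subst prod.lessThan_Suc_shift) simp
  also have "\<dots> = cmod (w {u, hd q}) * path_weight w q"
    unfolding path_weight_def using n assms by (simp add: hd_conv_nth)
  finally show ?thesis .
qed

lemma paths_decomp:
  assumes tw: "twosets E" and uS: "u \<in> S" and uv: "u \<noteq> v"
  shows "paths (induced_edges E S) u v
       = (\<Union>i\<in>{i\<in>S. {u,i}\<in>E}. (Cons u) ` paths (induced_edges E (S - {u})) i v)"
proof
  show "paths (induced_edges E S) u v \<subseteq> (\<Union>i\<in>{i\<in>S. {u,i}\<in>E}. (Cons u) ` paths (induced_edges E (S - {u})) i v)"
  proof
    fix p assume p: "p \<in> paths (induced_edges E S) u v"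
    then have ne: "p \<noteq> []" and d: "distinct p" and h: "hd p = u" and l: "last p = v"
      and ed: "\<And>k. Suc k < length p \<Longrightarrow> {p ! k, p ! Suc k} \<in> induced_edges E S"
      unfolding paths_def by auto
    obtain q where pq: "p = u # q" using ne h by (cases p) auto
    have qne: "q \<noteq> []" using pq l uv by auto
    define i where "i = hd q"
    have e0: "{u, i} \<in> induced_edges E S" using ed[of 0] pq qne unfolding i_def
      by (cases q) auto
    then have iN: "i \<in> {i\<in>S. {u,i}\<in>E}" unfolding induced_edges_def by auto
    have uq: "u \<notin> set q" using d pq by simp
    have "q \<in> paths (induced_edges E (S - {u})) i v"
      unfolding paths_def
    proof (intro CollectI conjI allI impI)
      show "q \<noteq> []" "distinct q" "hd q = i" "last q = v" using qne d pq l i_def by auto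
      fix k assume k: "Suc k < length q"
      have "{q ! k, q ! Suc k} \<in> induced_edges E S" using ed[of "Suc k"] k pq by simp
      moreover have "q ! k \<noteq> u" "q ! Suc k \<noteq> u" using uq k nth_mem
        by (metis Suc_lessD)+
      ultimately show "{q ! k, q ! Suc k} \<in> induced_edges E (S - {u})"
        unfolding induced_edges_def by auto
    qed
    then show "p \<in> (\<Union>i\<in>{i\<in>S. {u,i}\<in>E}. (Cons u) ` paths (induced_edges E (S - {u})) i v)"
      using iN pq by blast
  qed
next
  show "(\<Union>i\<in>{i\<in>S. {u,i}\<in>E}. (Cons u) ` paths (induced_edges E (S - {u})) i v) \<subseteq> paths (induced_edges E S) u v"
  proof
    fix p assume "p \<in> (\<Union>i\<in>{i\<in>S. {u,i}\<in>E}. (Cons u) ` paths (induced_edges E (S - {u})) i v)"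
    then obtain i q where iS: "i \<in> S" and iE: "{u,i} \<in> E"
      and q: "q \<in> paths (induced_edges E (S - {u})) i v" and pq: "p = u # q" by auto
    have qne: "q \<noteq> []" and d: "distinct q" and h: "hd q = i" and l: "last q = v"
      and ed: "\<And>k. Suc k < length q \<Longrightarrow> {q ! k, q ! Suc k} \<in> induced_edges E (S - {u})"
      using q unfolding paths_def by auto
    have iu: "i \<noteq> u" using twosets_ne[OF tw iE] .
    have "set q \<subseteq> insert i (S - {u})" by (rule paths_set[OF q])
    then have uq: "u \<notin> set q" using iu by auto
    show "p \<in> paths (induced_edges E S) u v"
      unfolding paths_def pq
    proof (intro CollectI conjI allI impI)
      show "u # q \<noteq> []" "distinct (u # q)" "hd (u # q) = u" "last (u # q) = v"
        using d uq l qne by auto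
      fix k assume k: "Suc k < length (u # q)"
      show "{(u # q) ! k, (u # q) ! Suc k} \<in> induced_edges E S"
      proof (cases k)
        case 0
        then show ?thesis using iE iS uS h qne unfolding induced_edges_def
          by (cases q) auto
      next
        case (Suc j)
        then have "{q ! j, q ! Suc j} \<in> induced_edges E (S - {u})" using ed k by simp
        then show ?thesis using Suc unfolding induced_edges_def by auto
      qed
    qed
  qed
qed

lemma paths_sum:
  assumes tw: "twosets E" and fS: "finite S" and uS: "u \<in> S" and uv: "u \<noteq> v"
  shows "(\<Sum>p\<in>paths (induced_edges E S) u v. f p)
       = (\<Sum>i\<in>{i\<in>S. {u,i}\<in>E}. \<Sum>q\<in>paths (induced_edges E (S - {u})) i v. f (u # q))"
proof -
  have "(\<Sum>p\<in>paths (induced_edges E S) u v. f p)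
      = (\<Sum>i\<in>{i\<in>S. {u,i}\<in>E}. \<Sum>p\<in>(Cons u) ` paths (induced_edges E (S - {u})) i v. f p)"
    unfolding paths_decomp[OF tw uS uv]
  proof (rule sum.UNION_disjoint)
    show "finite {i\<in>S. {u,i}\<in>E}" using fS by simp
    show "\<forall>i\<in>{i\<in>S. {u,i}\<in>E}. finite ((Cons u) ` paths (induced_edges E (S - {u})) i v)"
      using fS finite_paths[of "S - {u}"] by (auto intro!: finite_imageI)
    show "\<forall>i\<in>{i\<in>S. {u,i}\<in>E}. \<forall>j\<in>{i\<in>S. {u,i}\<in>E}. i \<noteq> j \<longrightarrow>
        (Cons u) ` paths (induced_edges E (S - {u})) i v \<inter> (Cons u) ` paths (induced_edges E (S - {u})) j v = {}"
      unfolding paths_def by auto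
  qed
  also have "\<dots> = (\<Sum>i\<in>{i\<in>S. {u,i}\<in>E}. \<Sum>q\<in>paths (induced_edges E (S - {u})) i v. f (u # q))"
    by (rule sum.cong[OF refl]) (simp add: sum.reindex)
  finally show ?thesis .
qed


lemma main_identity:
  fixes E :: "'a set set" and w :: "'a set \<Rightarrow> complex" and z :: "'a \<Rightarrow> real"
  assumes tw: "twosets E"
  shows "finite S \<Longrightarrow> \<forall>u v. u \<in> S \<longrightarrow> v \<in> S \<longrightarrow> u \<noteq> v \<longrightarrow>
     Q E w z (S - {u}) * Q E w z (S - {v}) - Q E w z S * Q E w z (S - {u, v})
     = (\<Sum>p\<in>paths (induced_edges E S) u v. (path_weight w p * Q E w z (S - set p)) ^ 2)"
proof (induction S rule: finite_psubset_induct)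
  case (psubset S)
  note fS = psubset.hyps(1)
  let ?Q = "Q E w z"
  show ?case
  proof (intro allI impI)
    fix u v assume uS: "u \<in> S" and vS: "v \<in> S" and uv: "u \<noteq> v"
    define H where "H = S - {u}"
    define N where "N = {i\<in>S. {u,i}\<in>E}"
    define a where "a = (\<lambda>i. cmod (w {u,i}) ^ 2)"
    have fN: "finite N" using fS unfolding N_def by simp
    have iH: "i \<in> H" if "i \<in> N" for i
      using that twosets_ne[OF tw] unfolding N_def H_def by auto
    have vH: "v \<in> H" using vS uv unfolding H_def by auto
    have R1: "?Q S = z u * ?Q H - (\<Sum>i\<in>N. a i * ?Q (H - {i}))"
    proof -
      have "?Q S = z u * ?Q (S - {u}) - (\<Sum>i\<in>N. a i * ?Q (S - {u,i}))"
        unfolding N_def a_def by (rule Q_rec[OF tw fS uS])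
      moreover have "S - {u,i} = H - {i}" for i unfolding H_def by auto
      ultimately show ?thesis unfolding H_def by simp
    qed
    have R2: "?Q (S - {v}) = z u * ?Q (H - {v}) - (\<Sum>i\<in>N. if i \<noteq> v then a i * ?Q (H - {v} - {i}) else 0)"
    proof -
      have "?Q (S - {v}) = z u * ?Q (S - {v} - {u})
          - (\<Sum>i\<in>{i\<in>S - {v}. {u,i}\<in>E}. a i * ?Q (S - {v} - {u,i}))"
        unfolding a_def by (rule Q_rec[OF tw]) (use fS uS uv in auto)
      moreover have "S - {v} - {u} = H - {v}" unfolding H_def by auto
      moreover have "(\<Sum>i\<in>{i\<in>S - {v}. {u,i}\<in>E}. a i * ?Q (S - {v} - {u,i}))
          = (\<Sum>i\<in>N. if i \<noteq> v then a i * ?Q (H - {v} - {i}) else 0)"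
      proof -
        have e1: "S - {v} - {u,i} = H - {v} - {i}" for i unfolding H_def by auto
        have e2: "{i\<in>S - {v}. {u,i}\<in>E} = {i\<in>N. i \<noteq> v}" unfolding N_def by auto
        have e3: "(\<Sum>i\<in>N. if i \<noteq> v then a i * ?Q (H - {v} - {i}) else 0)
           = (\<Sum>i\<in>{i\<in>N. i \<noteq> v}. a i * ?Q (H - {v} - {i}))"
          by (rule sum.inter_filter[OF fN, symmetric])
        show ?thesis unfolding e1 e2 e3 ..
      qed
      ultimately show ?thesis by (simp only:)
    qed
    have Suv: "S - {u, v} = H - {v}" unfolding H_def by auto
    define D where "D = (\<lambda>i. if i = v then ?Q (H - {v}) ^ 2
                      else ?Q (H - {i}) * ?Q (H - {v}) - ?Q H * ?Q (H - {v} - {i}))"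
    have LHS: "?Q H * ?Q (S - {v}) - ?Q S * ?Q (H - {v}) = (\<Sum>i\<in>N. a i * D i)"
    proof -
      have "(\<Sum>i\<in>N. a i * D i) = (\<Sum>i\<in>N. a i * ?Q (H - {i}) * ?Q (H - {v})
            - ?Q H * (if i \<noteq> v then a i * ?Q (H - {v} - {i}) else 0))"
        by (rule sum.cong[OF refl]) (auto simp: D_def algebra_simps power2_eq_square)
      also have "\<dots> = (\<Sum>i\<in>N. a i * ?Q (H - {i})) * ?Q (H - {v})
          - ?Q H * (\<Sum>i\<in>N. if i \<noteq> v then a i * ?Q (H - {v} - {i}) else 0)"
        by (simp add: sum_subtractf sum_distrib_left sum_distrib_right)
      finally show ?thesis unfolding R1 R2 by (simp add: algebra_simps)
    qed
    have RHS: "(\<Sum>p\<in>paths (induced_edges E S) u v. (path_weight w p * ?Q (S - set p)) ^ 2)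
        = (\<Sum>i\<in>N. a i * (\<Sum>q\<in>paths (induced_edges E H) i v. (path_weight w q * ?Q (H - set q)) ^ 2))"
      unfolding paths_sum[OF tw fS uS uv] N_def[symmetric] H_def[symmetric] sum_distrib_left
    proof (intro sum.cong refl)
      fix i q assume q: "q \<in> paths (induced_edges E H) i v"
      then have qne: "q \<noteq> []" and h: "hd q = i" unfolding paths_def by auto
      have "S - set (u # q) = H - set q" unfolding H_def by auto
      then show "(path_weight w (u # q) * ?Q (S - set (u # q)))\<^sup>2
          = a i * (path_weight w q * ?Q (H - set q))\<^sup>2"
        unfolding path_weight_Cons[OF qne] h a_def by (simp add: power_mult_distrib)
    qed
    have Di: "a i * D i = a i * (\<Sum>q\<in>paths (induced_edges E H) i v. (path_weight w q * ?Q (H - set q)) ^ 2)"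
      if iN: "i \<in> N" for i
    proof (cases "i = v")
      case True
      have "path_weight w [v] = 1" unfolding path_weight_def by simp
      then show ?thesis using True by (simp add: paths_self D_def)
    next
      case False
      have HS: "H \<subset> S" using uS unfolding H_def by auto
      have IH: "\<forall>u v. u \<in> H \<longrightarrow> v \<in> H \<longrightarrow> u \<noteq> v \<longrightarrow>
         ?Q (H - {u}) * ?Q (H - {v}) - ?Q H * ?Q (H - {u, v})
         = (\<Sum>p\<in>paths (induced_edges E H) u v. (path_weight w p * ?Q (H - set p)) ^ 2)"
        by (rule psubset.IH[OF HS])
      have e: "H - {v} - {i} = H - {i, v}" by auto
      show ?thesis using IH iH[OF iN] vH False unfolding D_def e by simp
    qed
    show "?Q (S - {u}) * ?Q (S - {v}) - ?Q S * ?Q (S - {u, v})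
       = (\<Sum>p\<in>paths (induced_edges E S) u v. (path_weight w p * ?Q (S - set p)) ^ 2)"
      unfolding RHS Suv H_def[symmetric] LHS using Di by (intro sum.cong refl) auto
  qed
qed


theorem lemma4p5:
  fixes V :: "'a set" and E :: "'a set set" and w :: "'a set \<Rightarrow> complex"
    and w1 :: "'a \<Rightarrow> real" and u v :: 'a and x :: real
  assumes "simple_graph V E"
    and "\<forall>e\<in>E. w e \<noteq> 0"
    and "u \<in> V" and "v \<in> V" and "u \<noteq> v"
  shows "eta_del V E w w1 {u} x * eta_del V E w w1 {v} x
           - eta_w V E w w1 x * eta_del V E w w1 {u, v} x
         = (\<Sum>p\<in>paths E u v. (path_weight w p * eta_del V E w w1 (set p) x) ^ 2)"
proof -
  have fV: "finite V" and sg: "\<forall>e\<in>E. \<exists>a b. a \<noteq> b \<and> a \<in> V \<and> b \<in> V \<and> e = {a, b}"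
    using assms(1) unfolding simple_graph_def by auto
  have tw: "twosets E" unfolding twosets_def
  proof
    fix e assume "e \<in> E"
    then obtain a b where "a \<noteq> b" "e = {a,b}" using sg by meson
    then show "\<exists>a b. a \<noteq> b \<and> e = {a, b}" by blast
  qed
  have EV: "induced_edges E V = E" unfolding induced_edges_def
  proof (intro set_eqI iffI)
    fix e assume "e \<in> E"
    then obtain a b where "a \<in> V" "b \<in> V" "e = {a,b}" using sg by meson
    then show "e \<in> {e \<in> E. e \<subseteq> V}" using \<open>e \<in> E\<close> by simp
  qed simp
  define z where "z = (\<lambda>y. x - w1 y)"
  have del: "eta_del V E w w1 X x = Q E w z (V - X)" for X
    unfolding eta_del_def z_def by (rule eta_Q[OF tw]) (use fV in simp)
  have full: "eta_w V E w w1 x = Q E w z V"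
    using eta_Q[OF tw fV, of w w1 x] unfolding EV z_def .
  show ?thesis
    unfolding del full
    using main_identity[OF tw fV, of w z] assms(3-5) EV by simp
qed

end
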